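(* If $Q\in\mathcal{P}$ has full range, i.e. $\{Q(A):A\in\mathcal{F}\}=[0,1]$, then $D^*(v,Q)=L(v)$ for all $0<v<2$.
   Context: Let $(\Omega,\mathcal{F},\mu)$ be a finite or $\sigma$-finite measure space, and let $\mathcal{P}$ be the set of probability measures on $(\Omega,\mathcal{F})$ absolutely continuous with respect to $\mu$. For $P,Q\in\mathcal{P}$ the lower-case letters $p,q$ denote their densities with respect to $\mu$. The Kullback–Leibler divergence is $D(P\Vert Q)=\int\ln\frac{dP}{dQ}\,dP$ if $P\ll Q$, and $+\infty$ otherwise. The total variation distance is $V(P,Q)=\int_\Omega|p-q|\,d\mu$. For $v>0$ define $D^*(v,Q)=\inf\{D(P\Vert Q):P\in\mathcal{P},\ V(P,Q)\ge v\}$, with $\inf\emptyset=+\infty$. Vajda's function is $L(v)=\inf\{D(P\Vert Q):V(P,Q)=v\}$, where the infimum is over all pairs of probability measures $P,Q$ on a common measurable space. *)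

theory Defs
  imports "HOL-Probability.Probability"
begin

definition probs_ac :: "'a measure \<Rightarrow> 'a measure set" where
  "probs_ac \<mu> = {P. prob_space P \<and> sets P = sets \<mu> \<and> absolutely_continuous \<mu> P}"

text \<open>Kullback-Leibler divergence D(P||Q) = int ln (dP/dQ) dP if P << Q, and +infinity
  otherwise (the integral is +infinity when ln (dP/dQ) is not P-integrable; its negative
  part is always P-integrable).\<close>
definition KL_div :: "'a measure \<Rightarrow> 'a measure \<Rightarrow> ereal" where
  "KL_div P Q =
    (if sets P = sets Q \<and> absolutely_continuous Q P then
       (if integrable P (\<lambda>x. ln (enn2real (RN_deriv Q P x)))
        then ereal (\<integral>x. ln (enn2real (RN_deriv Q P x)) \<partial>P)
        else \<infinity>)
     else \<infinity>)"

definition TV :: "'a measure \<Rightarrow> 'a measure \<Rightarrow> 'a measure \<Rightarrow> real" where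
  "TV \<mu> P Q = (\<integral>x. \<bar>enn2real (RN_deriv \<mu> P x) - enn2real (RN_deriv \<mu> Q x)\<bar> \<partial>\<mu>)"

definition Dstar :: "'a measure \<Rightarrow> real \<Rightarrow> 'a measure \<Rightarrow> ereal" where
  "Dstar \<mu> v Q = Inf {KL_div P Q | P. P \<in> probs_ac \<mu> \<and> TV \<mu> P Q \<ge> v}"

text \<open>Vajda's function restricted to measurable spaces whose points have type 'b:
  infimum of D(P||Q) over all pairs of probability measures P, Q on a common measurable
  space (with carrier in type 'b) with V(P,Q) = v; V is computed w.r.t. any sigma-finite
  dominating measure (its value does not depend on the choice).  The true Vajda function
  L(v) is the infimum of vajda_L_on TYPE('b) v over all types 'b.\<close>
definition vajda_L_on :: "'b itself \<Rightarrow> real \<Rightarrow> ereal" where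
  "vajda_L_on _ v = Inf {KL_div P Q | (\<mu>::'b measure) P Q.
      sigma_finite_measure \<mu> \<and> P \<in> probs_ac \<mu> \<and> Q \<in> probs_ac \<mu> \<and> TV \<mu> P Q = v}"

end

theory Submission imports Defs begin

definition dens :: "'a measure \<Rightarrow> 'a measure \<Rightarrow> 'a \<Rightarrow> real" where
  "dens M P x = enn2real (RN_deriv M P x)"

lemma dens_meas[measurable]: "dens M P \<in> borel_measurable M"
  unfolding dens_def by measurable

lemma dens_nonneg: "0 \<le> dens M P x"
  unfolding dens_def by simp

lemma probs_acD:
  assumes "P \<in> probs_ac M"
  shows "prob_space P" "sets P = sets M" "absolutely_continuous M P"
  using assms unfolding probs_ac_def by auto

lemma dens_density:
  assumes M: "sigma_finite_measure M" and P: "P \<in> probs_ac M"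
  shows "density M (\<lambda>x. ennreal (dens M P x)) = P"
proof -
  interpret sigma_finite_measure M by fact
  interpret Pp: prob_space P using probs_acD[OF P] by simp
  have ac: "absolutely_continuous M P" "sets P = sets M" using probs_acD[OF P] by auto
  have "sigma_finite_measure P" by (rule Pp.sigma_finite_measure_axioms)
  from RN_deriv_finite[OF this ac]
  have "AE x in M. RN_deriv M P x = ennreal (dens M P x)"
    by eventually_elim (auto simp: dens_def less_top)
  then have "density M (RN_deriv M P) = density M (\<lambda>x. ennreal (dens M P x))"
    by (intro density_cong) auto
  with density_RN_deriv[OF ac] show ?thesis by simp
qed

lemma dens_integral:
  assumes M: "sigma_finite_measure M" and P: "P \<in> probs_ac M"
    and f: "f \<in> borel_measurable M"
  shows "integral\<^sup>L P f = (\<integral>x. dens M P x * f x \<partial>M)"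
    and "integrable P f \<longleftrightarrow> integrable M (\<lambda>x. dens M P x * f x)"
proof -
  interpret sigma_finite_measure M by fact
  interpret Pp: prob_space P using probs_acD[OF P] by simp
  have ac: "absolutely_continuous M P" "sets P = sets M" using probs_acD[OF P] by auto
  have "sigma_finite_measure P" by (rule Pp.sigma_finite_measure_axioms)
  show "integral\<^sup>L P f = (\<integral>x. dens M P x * f x \<partial>M)"
    unfolding dens_def by (rule RN_deriv_integral[OF \<open>sigma_finite_measure P\<close> ac f])
  show "integrable P f \<longleftrightarrow> integrable M (\<lambda>x. dens M P x * f x)"
    unfolding dens_def by (rule RN_deriv_integrable[OF \<open>sigma_finite_measure P\<close> ac f])
qed

lemma dens_integrable:
  assumes M: "sigma_finite_measure M" and P: "P \<in> probs_ac M"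
  shows "integrable M (dens M P)" "(\<integral>x. dens M P x \<partial>M) = 1"
proof -
  interpret Pp: prob_space P using probs_acD[OF P] by simp
  have "integrable P (\<lambda>x. 1::real)" by simp
  then show "integrable M (dens M P)" using dens_integral(2)[OF M P, of "\<lambda>x. 1"] by simp
  have "integral\<^sup>L P (\<lambda>x. 1::real) = 1" by (simp add: Pp.prob_space)
  then show "(\<integral>x. dens M P x \<partial>M) = 1" using dens_integral(1)[OF M P, of "\<lambda>x. 1"] by simp
qed

lemma dens_measure:
  assumes M: "sigma_finite_measure M" and P: "P \<in> probs_ac M" and A: "A \<in> sets M"
  shows "measure P A = (\<integral>x. dens M P x * indicator A x \<partial>M)"
    and "integrable M (\<lambda>x. dens M P x * indicator A x)"
proof -
  interpret Pp: prob_space P using probs_acD[OF P] by simp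
  have A': "A \<in> sets P" using A probs_acD[OF P] by simp
  have "integral\<^sup>L P (indicator A) = measure P A"
    using A' by (simp add: Pp.emeasure_finite)
  then show "measure P A = (\<integral>x. dens M P x * indicator A x \<partial>M)"
    using dens_integral(1)[OF M P, of "indicator A"] A by simp
  have "integrable P (indicator A :: _ \<Rightarrow> real)" using A' by (intro integrable_real_indicator) (auto simp: less_top[symmetric])
  then show "integrable M (\<lambda>x. dens M P x * indicator A x)"
    using dens_integral(2)[OF M P, of "indicator A"] A by simp
qed

lemma dens_emeasure:
  assumes M: "sigma_finite_measure M" and P: "P \<in> probs_ac M" and A: "A \<in> sets M"
  shows "emeasure P A = (\<integral>\<^sup>+x. ennreal (dens M P x) * indicator A x \<partial>M)"
  using A by (subst dens_density[OF M P, symmetric]) (simp add: emeasure_density)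


lemma TV_eq:
  assumes M: "sigma_finite_measure M" and P: "P \<in> probs_ac M" and Q: "Q \<in> probs_ac M"
  defines "A \<equiv> {x\<in>space M. dens M Q x < dens M P x}"
  shows "TV M P Q = 2 * (measure P A - measure Q A)"
proof -
  have A: "A \<in> sets M" unfolding A_def by measurable
  note iP = dens_integrable[OF M P] and iQ = dens_integrable[OF M Q]
  note mP = dens_measure[OF M P A] and mQ = dens_measure[OF M Q A]
  have "TV M P Q = (\<integral>x. 2 * (dens M P x * indicator A x - dens M Q x * indicator A x)
        - (dens M P x - dens M Q x) \<partial>M)"
    unfolding TV_def dens_def[symmetric]
    by (intro Bochner_Integration.integral_cong refl) (auto simp: A_def indicator_def)
  also have "\<dots> = 2 * ((\<integral>x. dens M P x * indicator A x \<partial>M) - (\<integral>x. dens M Q x * indicator A x \<partial>M))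
       - ((\<integral>x. dens M P x \<partial>M) - (\<integral>x. dens M Q x \<partial>M))"
    using iP iQ mP mQ by simp
  also have "\<dots> = 2 * (measure P A - measure Q A)"
    using iP iQ mP mQ by simp
  finally show ?thesis .
qed

lemma dens_zero_null:
  assumes M: "sigma_finite_measure M" and P: "P \<in> probs_ac M"
  shows "emeasure P {x\<in>space M. dens M P x = 0} = 0"
proof -
  have B: "{x\<in>space M. dens M P x = 0} \<in> sets M" by measurable
  have "emeasure P {x\<in>space M. dens M P x = 0} =
     (\<integral>\<^sup>+x. ennreal (dens M P x) * indicator {x\<in>space M. dens M P x = 0} x \<partial>M)"
    by (rule dens_emeasure[OF M P B])
  also have "\<dots> = (\<integral>\<^sup>+x. 0 \<partial>M)"
    by (intro nn_integral_cong) (auto simp: indicator_def)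
  finally show ?thesis by simp
qed

lemma AE_dens_pos:
  assumes M: "sigma_finite_measure M" and P: "P \<in> probs_ac M"
  shows "AE x in P. 0 < dens M P x"
proof -
  have B: "{x\<in>space M. dens M P x = 0} \<in> sets P" using probs_acD[OF P] by measurable
  have "AE x in P. x \<notin> {x\<in>space M. dens M P x = 0}"
    using dens_zero_null[OF M P] B by (intro AE_not_in) auto
  moreover have "space P = space M" using probs_acD[OF P] sets_eq_imp_space_eq by blast
  ultimately show ?thesis
    by (elim AE_mp) (intro AE_I2, auto simp: less_le dens_nonneg)
qed

lemma AE_dens_Q_pos:
  assumes M: "sigma_finite_measure M" and P: "P \<in> probs_ac M" and Q: "Q \<in> probs_ac M"
    and ac: "absolutely_continuous Q P"
  shows "AE x in P. 0 < dens M Q x"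
  using AE_dens_pos[OF M Q] probs_acD[OF P] probs_acD[OF Q] ac
  by (intro absolutely_continuous_AE[of P Q]) auto

lemma AE_q0_p0:
  assumes M: "sigma_finite_measure M" and P: "P \<in> probs_ac M" and Q: "Q \<in> probs_ac M"
    and ac: "absolutely_continuous Q P"
  shows "AE x in M. dens M Q x = 0 \<longrightarrow> dens M P x = 0"
proof -
  let ?B = "{x\<in>space M. dens M Q x = 0}"
  have B: "?B \<in> sets M" by measurable
  have "emeasure Q ?B = 0" by (rule dens_zero_null[OF M Q])
  then have "emeasure P ?B = 0"
    using ac B probs_acD[OF Q] by (intro absolutely_continuousD[OF ac]) auto
  then have "(\<integral>\<^sup>+x. ennreal (dens M P x) * indicator ?B x \<partial>M) = 0"
    using dens_emeasure[OF M P B] by simp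
  then have "AE x in M. ennreal (dens M P x) * indicator ?B x = 0"
    by (subst (asm) nn_integral_0_iff_AE) auto
  then show ?thesis
    by (elim AE_mp) (intro AE_I2, insert dens_nonneg[of M P], auto simp: indicator_def intro: antisym)
qed

lemma RN_QP:
  assumes M: "sigma_finite_measure M" and P: "P \<in> probs_ac M" and Q: "Q \<in> probs_ac M"
    and ac: "absolutely_continuous Q P"
  shows "AE x in P. RN_deriv Q P x = ennreal (dens M P x / dens M Q x)"
proof -
  interpret Qp: prob_space Q using probs_acD[OF Q] by simp
  have sQ: "sets Q = sets M" using probs_acD[OF Q] by simp
  have eq: "density Q (\<lambda>x. ennreal (dens M P x / dens M Q x)) = P"
  proof -
    have "density Q (\<lambda>x. ennreal (dens M P x / dens M Q x)) =
      density (density M (\<lambda>x. ennreal (dens M Q x))) (\<lambda>x. ennreal (dens M P x / dens M Q x))"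
      using dens_density[OF M Q] by simp
    also have "\<dots> = density M (\<lambda>x. ennreal (dens M P x))"
      by (rule density_density_divide) (auto simp: dens_nonneg AE_q0_p0[OF M P Q ac])
    also have "\<dots> = P" by (rule dens_density[OF M P])
    finally show ?thesis .
  qed
  have meas: "(\<lambda>x. ennreal (dens M P x / dens M Q x)) \<in> borel_measurable Q"
    using sQ by (simp add: measurable_cong_sets[OF sQ refl])
  have "AE x in Q. ennreal (dens M P x / dens M Q x) = RN_deriv Q P x"
    by (rule Qp.RN_deriv_unique[OF meas eq])
  then show ?thesis
    using probs_acD[OF P] probs_acD[OF Q] ac
    by (intro absolutely_continuous_AE[of P Q]) (auto elim!: AE_mp)
qed


lemma ln_bound:
  fixes p q c :: real
  assumes "0 < p" "0 < q" "0 < c"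
  shows "ln c + 1 - c * (q / p) \<le> ln (p / q)"
proof -
  have "ln (c * q / p) \<le> c * q / p - 1" using assms by (intro ln_le_minus_one) simp
  moreover have "ln (c * q / p) = ln c + ln q - ln p" using assms by (simp add: ln_mult ln_div)
  moreover have "ln (p / q) = ln p - ln q" using assms by (simp add: ln_div)
  ultimately show ?thesis by simp
qed

lemma h_integrals:
  assumes M: "sigma_finite_measure M" and P: "P \<in> probs_ac M" and Q: "Q \<in> probs_ac M"
    and A: "A \<in> sets M"
  shows "integrable P (\<lambda>x. indicator A x * (dens M Q x / dens M P x))"
    and "(\<integral>x. indicator A x * (dens M Q x / dens M P x) \<partial>P) \<le> measure Q A"
proof -
  let ?f = "\<lambda>x. indicator A x * (dens M Q x / dens M P x)"
  have fm: "?f \<in> borel_measurable M" using A by measurable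
  have ib: "integrable M (\<lambda>x. dens M Q x * indicator A x)" by (rule dens_measure(2)[OF M Q A])
  have le: "\<And>x. dens M P x * ?f x \<le> dens M Q x * indicator A x"
    using dens_nonneg[of M Q] by (auto simp: indicator_def)
  have ge: "\<And>x. 0 \<le> dens M P x * ?f x"
    using dens_nonneg[of M Q] dens_nonneg[of M P] by (auto simp: indicator_def)
  have im: "integrable M (\<lambda>x. dens M P x * ?f x)"
  proof (rule Bochner_Integration.integrable_bound[OF ib])
    show "(\<lambda>x. dens M P x * ?f x) \<in> borel_measurable M" using fm by measurable
    show "AE x in M. norm (dens M P x * ?f x) \<le> norm (dens M Q x * indicator A x)"
      using le ge dens_nonneg[of M Q] by (intro AE_I2) (auto simp: indicator_def)
  qed
  then show "integrable P ?f" using dens_integral(2)[OF M P fm] by simp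
  have "(\<integral>x. ?f x \<partial>P) = (\<integral>x. dens M P x * ?f x \<partial>M)" by (rule dens_integral(1)[OF M P fm])
  also have "\<dots> \<le> (\<integral>x. dens M Q x * indicator A x \<partial>M)"
    by (rule integral_mono[OF im ib le])
  also have "\<dots> = measure Q A" by (rule dens_measure(1)[OF M Q A, symmetric])
  finally show "(\<integral>x. ?f x \<partial>P) \<le> measure Q A" .
qed

lemma KL_lower:
  assumes M: "sigma_finite_measure M" and P: "P \<in> probs_ac M" and Q: "Q \<in> probs_ac M"
    and ac: "absolutely_continuous Q P"
    and int: "integrable P (\<lambda>x. ln (enn2real (RN_deriv Q P x)))"
    and A: "A \<in> sets M" and c1: "0 \<le> c1" and c2: "0 \<le> c2"
    and h1: "0 < c1 \<or> measure P A = 0" and h2: "0 < c2 \<or> measure P (space M - A) = 0"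
  shows "measure P A * ln c1 + measure P (space M - A) * ln c2 + 1
           - c1 * measure Q A - c2 * measure Q (space M - A)
         \<le> (\<integral>x. ln (enn2real (RN_deriv Q P x)) \<partial>P)"
proof -
  interpret Pp: prob_space P using probs_acD[OF P] by simp
  interpret Qp: prob_space Q using probs_acD[OF Q] by simp
  have sP: "sets P = sets M" using probs_acD[OF P] by simp
  have spP: "space P = space M" using sets_eq_imp_space_eq[OF sP] .
  have sQ: "sets Q = sets M" using probs_acD[OF Q] by simp
  have spQ: "space Q = space M" using sets_eq_imp_space_eq[OF sQ] .
  have Ac: "space M - A \<in> sets M" using A by auto
  let ?h = "\<lambda>x. dens M Q x / dens M P x"
  let ?G = "\<lambda>x. indicator A x * (ln c1 + 1) + indicator (space M - A) x * (ln c2 + 1)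
      - c1 * (indicator A x * ?h x) - c2 * (indicator (space M - A) x * ?h x)"
  note hA = h_integrals[OF M P Q A] and hAc = h_integrals[OF M P Q Ac]
  have iA: "integrable P (indicator A :: _ \<Rightarrow> real)"
    using A sP by (intro integrable_real_indicator) (auto simp: less_top[symmetric])
  have iAc: "integrable P (indicator (space M - A) :: _ \<Rightarrow> real)"
    using Ac sP by (intro integrable_real_indicator) (auto simp: less_top[symmetric])
  have iG: "integrable P ?G"
    by (intro Bochner_Integration.integrable_diff Bochner_Integration.integrable_add
        integrable_mult_right integrable_mult_left hA(1) hAc(1) iA iAc)
  have e1: "AE x in P. x \<in> A \<longrightarrow> 0 < c1"
  proof (cases "0 < c1")
    case True then show ?thesis by simp
  next
    case False
    then have "measure P A = 0" using h1 by simp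
    then have "A \<in> null_sets P" using A sP by (simp add: null_sets_def Pp.emeasure_eq_measure)
    then show ?thesis by (rule AE_not_in[THEN AE_mp]) simp
  qed
  have e2: "AE x in P. x \<in> space M - A \<longrightarrow> 0 < c2"
  proof (cases "0 < c2")
    case True then show ?thesis by simp
  next
    case False
    then have "measure P (space M - A) = 0" using h2 by simp
    then have "space M - A \<in> null_sets P" using Ac sP by (simp add: null_sets_def Pp.emeasure_eq_measure)
    then show ?thesis by (rule AE_not_in[THEN AE_mp]) (intro AE_I2, auto)
  qed
  have le: "AE x in P. ?G x \<le> ln (enn2real (RN_deriv Q P x))"
    using AE_space[of P] e1 e2 RN_QP[OF M P Q ac] AE_dens_pos[OF M P] AE_dens_Q_pos[OF M P Q ac]
  proof eventually_elim
    case (elim x)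
    then have x: "x \<in> space M" using spP by simp
    have rn: "enn2real (RN_deriv Q P x) = dens M P x / dens M Q x"
      using elim by (simp add: dens_nonneg)
    show ?case
    proof (cases "x \<in> A")
      case True
      then show ?thesis using elim ln_bound[of "dens M P x" "dens M Q x" c1] rn x
        by (simp add: indicator_def)
    next
      case False
      then show ?thesis using elim ln_bound[of "dens M P x" "dens M Q x" c2] rn x
        by (simp add: indicator_def)
    qed
  qed
  have "(\<integral>x. ?G x \<partial>P) \<le> (\<integral>x. ln (enn2real (RN_deriv Q P x)) \<partial>P)"
    by (rule integral_mono_AE[OF iG int le])
  moreover have "(\<integral>x. ?G x \<partial>P) = measure P A * (ln c1 + 1) + measure P (space M - A) * (ln c2 + 1)
     - c1 * (\<integral>x. indicator A x * ?h x \<partial>P) - c2 * (\<integral>x. indicator (space M - A) x * ?h x \<partial>P)"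
    using hA(1) hAc(1) iA iAc A Ac sP
    by (simp add: Pp.emeasure_eq_measure less_top[symmetric] del: times_divide_eq_right times_divide_eq_left)
  moreover have "measure P A + measure P (space M - A) = 1"
    using Pp.prob_compl[of A] A sP spP by simp
  moreover have "c1 * (\<integral>x. indicator A x * ?h x \<partial>P) \<le> c1 * measure Q A"
    using hA(2) c1 by (intro mult_left_mono)
  moreover have "c2 * (\<integral>x. indicator (space M - A) x * ?h x \<partial>P) \<le> c2 * measure Q (space M - A)"
    using hAc(2) c2 by (intro mult_left_mono)
  ultimately show ?thesis by (simp add: algebra_simps)
qed


definition fKL :: "real \<Rightarrow> real \<Rightarrow> real" where
  "fKL a b = a * ln (a / b) + (1 - a) * ln ((1 - a) / (1 - b))"

definition Sset :: "real \<Rightarrow> ereal set" where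
  "Sset v = {ereal (fKL a b) | a b. 0 < b \<and> b < 1 \<and> b \<le> a \<and> a \<le> 1 \<and> a - b = v / 2}"

lemma ln_nonpos': "0 \<le> (x::real) \<Longrightarrow> x \<le> 1 \<Longrightarrow> ln x \<le> 0"
  by (cases "x = 0") auto

lemma KL_ge_Inf:
  assumes M: "sigma_finite_measure M" and P: "P \<in> probs_ac M" and Q: "Q \<in> probs_ac M"
    and v: "0 < v" "v \<le> TV M P Q"
  shows "Inf (Sset v) \<le> KL_div P Q"
proof (cases "sets P = sets Q \<and> absolutely_continuous Q P \<and> integrable P (\<lambda>x. ln (enn2real (RN_deriv Q P x)))")
  case False
  then show ?thesis unfolding KL_div_def by auto
next
  case True
  then have ac: "absolutely_continuous Q P"
    and int: "integrable P (\<lambda>x. ln (enn2real (RN_deriv Q P x)))" by auto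
  have KL: "KL_div P Q = ereal (\<integral>x. ln (enn2real (RN_deriv Q P x)) \<partial>P)"
    using True unfolding KL_div_def by auto
  interpret Pp: prob_space P using probs_acD[OF P] by simp
  interpret Qp: prob_space Q using probs_acD[OF Q] by simp
  have sP: "sets P = sets M" using probs_acD[OF P] by simp
  have spP: "space P = space M" using sets_eq_imp_space_eq[OF sP] .
  have sQ: "sets Q = sets M" using probs_acD[OF Q] by simp
  have spQ: "space Q = space M" using sets_eq_imp_space_eq[OF sQ] .
  define A where "A = {x\<in>space M. dens M Q x < dens M P x}"
  have A: "A \<in> sets M" unfolding A_def by measurable
  define \<alpha> where "\<alpha> = measure P A"
  define \<beta> where "\<beta> = measure Q A"
  have TV: "TV M P Q = 2 * (\<alpha> - \<beta>)" unfolding \<alpha>_def \<beta>_def A_def by (rule TV_eq[OF M P Q])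
  have ab: "v / 2 \<le> \<alpha> - \<beta>" using v TV by simp
  have a1: "\<alpha> \<le> 1" unfolding \<alpha>_def by simp
  have b0: "0 \<le> \<beta>" unfolding \<beta>_def by simp
  have bpos: "0 < \<beta>"
  proof (rule ccontr)
    assume "\<not> 0 < \<beta>"
    then have "\<beta> = 0" using b0 by simp
    then have "emeasure Q A = 0" using A sQ by (simp add: \<beta>_def Qp.emeasure_eq_measure)
    then have "emeasure P A = 0" using A sQ by (intro absolutely_continuousD[OF ac]) auto
    then have "\<alpha> = 0" by (simp add: \<alpha>_def measure_def)
    then show False using ab v \<open>\<beta> = 0\<close> by simp
  qed
  define a where "a = \<beta> + v / 2"
  define c1 where "c1 = a / \<beta>"
  define c2 where "c2 = (1 - a) / (1 - \<beta>)"
  have aa: "a \<le> \<alpha>" using ab by (simp add: a_def)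
  have b1: "\<beta> < 1" using ab v a1 by simp
  have c1g: "1 \<le> c1" using bpos v by (simp add: c1_def a_def field_simps)
  have c2g: "0 \<le> c2" "c2 \<le> 1" using aa a1 b1 v by (auto simp: c2_def a_def field_simps)
  have cP: "measure P (space M - A) = 1 - \<alpha>"
    using Pp.prob_compl[of A] A sP spP by (simp add: \<alpha>_def)
  have cQ: "measure Q (space M - A) = 1 - \<beta>"
    using Qp.prob_compl[of A] A sQ spQ by (simp add: \<beta>_def)
  have h2: "0 < c2 \<or> measure P (space M - A) = 0"
  proof (cases "a < 1")
    case True then show ?thesis using b1 by (simp add: c2_def)
  next
    case False then have "\<alpha> = 1" using aa a1 by simp
    then show ?thesis using cP by simp
  qed
  have "\<alpha> * ln c1 + (1 - \<alpha>) * ln c2 + 1 - c1 * \<beta> - c2 * (1 - \<beta>)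
        \<le> (\<integral>x. ln (enn2real (RN_deriv Q P x)) \<partial>P)"
    using KL_lower[OF M P Q ac int A, of c1 c2] c1g c2g h2 cP cQ
    by (simp add: \<alpha>_def \<beta>_def)
  moreover have "c1 * \<beta> = a" "c2 * (1 - \<beta>) = 1 - a" using bpos b1 by (auto simp: c1_def c2_def)
  moreover have "0 \<le> ln c1" using c1g by simp
  moreover have "0 \<le> ln c1 - ln c2"
    using ln_nonpos'[of c2] c2g \<open>0 \<le> ln c1\<close> by linarith
  moreover have "0 \<le> (\<alpha> - a) * (ln c1 - ln c2)"
    using aa \<open>0 \<le> ln c1 - ln c2\<close> by simp
  ultimately have "fKL a \<beta> \<le> (\<integral>x. ln (enn2real (RN_deriv Q P x)) \<partial>P)"
    by (simp add: fKL_def c1_def[symmetric] c2_def[symmetric] algebra_simps)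
  moreover have "0 < \<beta> \<and> \<beta> < 1 \<and> \<beta> \<le> a \<and> a \<le> 1 \<and> a - \<beta> = v / 2"
    using bpos b1 aa a1 v by (auto simp: a_def)
  then have "ereal (fKL a \<beta>) \<in> Sset v"
    unfolding Sset_def by blast
  ultimately show ?thesis unfolding KL by (meson Inf_lower2 ereal_less_eq(3))
qed


lemma realize:
  assumes M: "sigma_finite_measure M" and Q: "Q \<in> probs_ac M" and A: "A \<in> sets M"
    and b: "measure Q A = b" "0 < b" "b < 1" and a: "b \<le> a" "a \<le> 1"
  shows "\<exists>P \<in> probs_ac M. TV M P Q = 2 * (a - b) \<and> KL_div P Q = ereal (fKL a b)"
proof -
  interpret Qp: prob_space Q using probs_acD[OF Q] by simp
  interpret sigma_finite_measure M by fact
  have sQ: "sets Q = sets M" using probs_acD[OF Q] by simp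
  have spQ: "space Q = space M" using sets_eq_imp_space_eq[OF sQ] .
  have Ac: "space M - A \<in> sets M" using A by auto
  note [measurable] = A Ac
  define c1 where "c1 = a / b"
  define c2 where "c2 = (1 - a) / (1 - b)"
  have c1g: "1 \<le> c1" using a b by (simp add: c1_def)
  have c2g: "0 \<le> c2" "c2 \<le> 1" using a b by (auto simp: c2_def)
  have cQ: "measure Q (space M - A) = 1 - b"
    using Qp.prob_compl[of A] A sQ spQ b by simp
  define r where "r x = c1 * indicator A x + c2 * indicator (space M - A) x" for x
  have r_nn: "0 \<le> r x" for x using c1g c2g by (simp add: r_def)
  have rM[measurable]: "r \<in> borel_measurable M" unfolding r_def using A by measurable
  have rQ: "r \<in> borel_measurable Q" using rM by (simp add: measurable_cong_sets[OF sQ refl])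
  have rQ': "(\<lambda>x. ennreal (r x)) \<in> borel_measurable Q"
    by (subst measurable_cong_sets[OF sQ refl]) measurable
  have iAQ: "integrable Q (indicator S :: _ \<Rightarrow> real)" if "S \<in> sets M" for S
    using that sQ by (intro integrable_real_indicator) (auto simp: less_top[symmetric])
  define P where "P = density Q (\<lambda>x. ennreal (r x))"
  have sP: "sets P = sets M" using sQ by (simp add: P_def)
  have spP: "space P = space M" using sets_eq_imp_space_eq[OF sP] .
  have emP: "emeasure P S = ennreal (c1 * measure Q (A \<inter> S) + c2 * measure Q ((space M - A) \<inter> S))"
    if S: "S \<in> sets M" for S
  proof -
    have "emeasure P S = (\<integral>\<^sup>+x. ennreal (r x) * indicator S x \<partial>Q)"
      unfolding P_def using S sQ by (simp add: emeasure_density)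
    also have "\<dots> = (\<integral>\<^sup>+x. ennreal (c1 * indicator (A \<inter> S) x + c2 * indicator ((space M - A) \<inter> S) x) \<partial>Q)"
      by (intro nn_integral_cong) (auto simp: r_def indicator_def)
    also have "\<dots> = ennreal (\<integral>x. c1 * indicator (A \<inter> S) x + c2 * indicator ((space M - A) \<inter> S) x \<partial>Q)"
    proof (rule nn_integral_eq_integral)
      show "integrable Q (\<lambda>x. c1 * indicator (A \<inter> S) x + c2 * indicator ((space M - A) \<inter> S) x)"
        using A S Ac iAQ[of "A \<inter> S"] iAQ[of "(space M - A) \<inter> S"] by simp
      show "AE x in Q. 0 \<le> c1 * indicator (A \<inter> S) x + c2 * indicator ((space M - A) \<inter> S) x"
        using c1g c2g by (intro AE_I2) simp
    qed
    also have "\<dots> = ennreal (c1 * measure Q (A \<inter> S) + c2 * measure Q ((space M - A) \<inter> S))"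
      using A S Ac iAQ[of "A \<inter> S"] iAQ[of "(space M - A) \<inter> S"] sQ
      by (simp add: Qp.emeasure_eq_measure less_top[symmetric])
    finally show ?thesis .
  qed
  have ee: "(space M - A) \<inter> A = {}" "A \<inter> (space M - A) = {}" by auto
  have PA: "emeasure P A = ennreal a" using emP[OF A] b c1g
    by (simp add: c1_def ee)
  have PAc: "emeasure P (space M - A) = ennreal (1 - a)" using emP[OF Ac] b cQ
    by (simp add: c2_def ee)
  have "emeasure P (space P) = 1"
  proof -
    have "emeasure P (space M) = ennreal (c1 * b + c2 * (1 - b))"
      using emP[of "space M"] b cQ A by (simp add: Int_absorb2 sets.sets_into_space)
    also have "c1 * b + c2 * (1 - b) = 1" using b by (simp add: c1_def c2_def)
    finally show ?thesis using spP by simp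
  qed
  then interpret Pp: prob_space P by (rule prob_spaceI)
  have acQP: "absolutely_continuous Q P"
    unfolding P_def by (rule absolutely_continuousI_density[OF rQ'])
  have acMP: "absolutely_continuous M P"
    using acQP probs_acD(3)[OF Q] unfolding absolutely_continuous_def by blast
  have Pin: "P \<in> probs_ac M" unfolding probs_ac_def using sP acMP Pp.prob_space_axioms by blast
  have mPA: "measure P A = a" using PA a b by (simp add: measure_def)
  have mPAc: "measure P (space M - A) = 1 - a" using PAc a by (simp add: measure_def)
  have "AE x in Q. ennreal (r x) = RN_deriv Q P x"
    by (rule Qp.RN_deriv_unique[OF rQ' P_def[symmetric]])
  then have "AE x in Q. RN_deriv Q P x = ennreal (r x)"
    by (elim AE_mp) (intro AE_I2 impI, erule sym)
  then have "AE x in Q. ln (enn2real (RN_deriv Q P x)) = ln c1 * indicator A x + ln c2 * indicator (space M - A) x"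
  proof (elim AE_mp, intro AE_I2 impI)
    fix x assume x: "x \<in> space Q" and e: "RN_deriv Q P x = ennreal (r x)"
    have rx: "enn2real (RN_deriv Q P x) = r x" using e r_nn[of x] by simp
    show "ln (enn2real (RN_deriv Q P x)) = ln c1 * indicator A x + ln c2 * indicator (space M - A) x"
      unfolding rx using x spQ by (cases "x \<in> A") (simp_all add: r_def)
  qed
  then have RN: "AE x in P. ln (enn2real (RN_deriv Q P x)) = ln c1 * indicator A x + ln c2 * indicator (space M - A) x"
    using sP sQ acQP by (intro absolutely_continuous_AE[of P Q]) auto
  have iAP: "integrable P (indicator S :: _ \<Rightarrow> real)" if "S \<in> sets M" for S
    using that sP by (intro integrable_real_indicator) (auto simp: less_top[symmetric])
  have iL: "integrable P (\<lambda>x. ln c1 * indicator A x + ln c2 * indicator (space M - A) x)"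
    using iAP[OF A] iAP[OF Ac] by simp
  have mL: "(\<lambda>x. ln (enn2real (RN_deriv Q P x))) \<in> borel_measurable P"
    using sP sQ by (subst measurable_cong_sets[of P Q, OF _ refl]) (simp, measurable)
  have RN': "AE x in P. ln c1 * indicator A x + ln c2 * indicator (space M - A) x = ln (enn2real (RN_deriv Q P x))"
    by (rule AE_mp[OF RN]) (intro AE_I2 impI, erule sym)
  have int: "integrable P (\<lambda>x. ln (enn2real (RN_deriv Q P x)))"
    by (rule integrable_cong_AE_imp[OF iL mL RN'])
  have "(\<integral>x. ln (enn2real (RN_deriv Q P x)) \<partial>P) = (\<integral>x. ln c1 * indicator A x + ln c2 * indicator (space M - A) x \<partial>P)"
    by (rule integral_cong_AE[OF mL borel_measurable_integrable[OF iL] RN])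
  also have "\<dots> = ln c1 * a + ln c2 * (1 - a)"
    using iAP[OF A] iAP[OF Ac] A Ac sP mPA mPAc by (simp add: Pp.emeasure_eq_measure less_top[symmetric])
  also have "\<dots> = fKL a b" by (simp add: fKL_def c1_def c2_def)
  finally have KL: "KL_div P Q = ereal (fKL a b)"
    unfolding KL_div_def using sP sQ acQP int by simp
  have "P = density M (\<lambda>x. ennreal (dens M Q x) * ennreal (r x))"
    unfolding P_def
    by (subst dens_density[OF M Q, symmetric], subst density_density_eq) auto
  then have Pd: "density M (\<lambda>x. ennreal (dens M Q x * r x)) = P"
    by (simp add: ennreal_mult dens_nonneg r_nn)
  have "AE x in M. ennreal (dens M Q x * r x) = RN_deriv M P x"
    by (rule RN_deriv_unique[OF _ Pd]) simp
  then have "AE x in M. dens M P x = dens M Q x * r x"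
  proof (elim AE_mp, intro AE_I2 impI)
    fix x assume "ennreal (dens M Q x * r x) = RN_deriv M P x"
    then show "dens M P x = dens M Q x * r x"
      unfolding dens_def[of M P] by (metis enn2real_ennreal mult_nonneg_nonneg dens_nonneg r_nn)
  qed
  then have "AE x in M. \<bar>enn2real (RN_deriv M P x) - enn2real (RN_deriv M Q x)\<bar>
      = dens M Q x * ((c1 - 1) * indicator A x + (1 - c2) * indicator (space M - A) x)"
  proof (elim AE_mp, intro AE_I2 impI)
    fix x assume x: "x \<in> space M" and e: "dens M P x = dens M Q x * r x"
    have q: "0 \<le> dens M Q x" by (rule dens_nonneg)
    show "\<bar>enn2real (RN_deriv M P x) - enn2real (RN_deriv M Q x)\<bar>
      = dens M Q x * ((c1 - 1) * indicator A x + (1 - c2) * indicator (space M - A) x)"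
    proof (cases "x \<in> A")
      case True
      then have "dens M P x - dens M Q x = dens M Q x * (c1 - 1)" using e x by (simp add: r_def algebra_simps)
      moreover have "0 \<le> dens M Q x * (c1 - 1)" using q c1g by simp
      ultimately show ?thesis using True x by (simp add: dens_def[symmetric])
    next
      case False
      then have "dens M Q x - dens M P x = dens M Q x * (1 - c2)" using e x by (simp add: r_def algebra_simps)
      moreover have "0 \<le> dens M Q x * (1 - c2)" using q c2g by simp
      ultimately show ?thesis using False x by (simp add: dens_def[symmetric] abs_minus_commute)
    qed
  qed
  then have "TV M P Q = (\<integral>x. dens M Q x * ((c1 - 1) * indicator A x + (1 - c2) * indicator (space M - A) x) \<partial>M)"
    unfolding TV_def using A by (intro integral_cong_AE) (simp_all, measurable)
  also have "\<dots> = (\<integral>x. (c1 - 1) * indicator A x + (1 - c2) * indicator (space M - A) x \<partial>Q)"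
    using A by (intro dens_integral(1)[OF M Q, symmetric]) measurable
  also have "\<dots> = (c1 - 1) * b + (1 - c2) * (1 - b)"
    using iAQ[OF A] iAQ[OF Ac] A Ac sQ b cQ by (simp add: Qp.emeasure_eq_measure less_top[symmetric])
  also have "\<dots> = 2 * (a - b)" using b by (simp add: c1_def c2_def field_simps)
  finally show ?thesis using KL Pin by blast
qed


theorem theorem2:
  fixes \<mu> Q :: "'a measure" and v :: real
  assumes "sigma_finite_measure \<mu>"
    and "Q \<in> probs_ac \<mu>"
    and "measure Q ` sets \<mu> = {0..1}"
    and "0 < v" and "v < 2"
  shows "Dstar \<mu> v Q = vajda_L_on TYPE('a) v \<and> Dstar \<mu> v Q \<le> vajda_L_on TYPE('b) v"
proof -
  note M = assms(1) and Q = assms(2) and rng = assms(3) and v = assms(4,5)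
  have real: "\<exists>P \<in> probs_ac \<mu>. TV \<mu> P Q = v \<and> KL_div P Q = s" if s: "s \<in> Sset v" for s
  proof -
    obtain a b where ab: "s = ereal (fKL a b)" "0 < b" "b < 1" "b \<le> a" "a \<le> 1" "a - b = v / 2"
      using s unfolding Sset_def by blast
    have "b \<in> measure Q ` sets \<mu>" using rng ab by simp
    then obtain A where A: "A \<in> sets \<mu>" "measure Q A = b" by auto
    from realize[OF M Q A(1) A(2) ab(2,3,4,5)] ab(1,6) show ?thesis by auto
  qed
  have lowD: "Inf (Sset v) \<le> Dstar \<mu> v Q"
    unfolding Dstar_def using KL_ge_Inf[OF M _ Q v(1)] by (auto intro!: Inf_greatest)
  have upD: "Dstar \<mu> v Q \<le> Inf (Sset v)"
  proof (rule Inf_greatest)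
    fix s assume "s \<in> Sset v"
    then obtain P where "P \<in> probs_ac \<mu>" "TV \<mu> P Q = v" "KL_div P Q = s" using real by blast
    then show "Dstar \<mu> v Q \<le> s" unfolding Dstar_def by (auto intro!: Inf_lower)
  qed
  have upL: "vajda_L_on TYPE('a) v \<le> Inf (Sset v)"
  proof (rule Inf_greatest)
    fix s assume "s \<in> Sset v"
    then obtain P where "P \<in> probs_ac \<mu>" "TV \<mu> P Q = v" "KL_div P Q = s" using real by blast
    then show "vajda_L_on TYPE('a) v \<le> s" unfolding vajda_L_on_def using M Q
      by (intro Inf_lower) blast
  qed
  have lowL: "Inf (Sset v) \<le> vajda_L_on c v" for c :: "'c itself"
    unfolding vajda_L_on_def using KL_ge_Inf[OF _ _ _ v(1)] by (auto intro!: Inf_greatest)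
  show ?thesis using lowD upD upL lowL[of "TYPE('a)"] lowL[of "TYPE('b)"] by (auto intro: antisym order_trans)
qed

end
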